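(* Let $F_n$ denote the number of leaves of the binary search tree $\mathbb{T}_n$ lying at generation $H_n$ (the size of the fringe). Then $\limsup_{n\to\infty}F_n=\infty$ almost surely.
   Context: Let $\mathbb{T}$ be the complete rooted binary tree. The binary search tree is the random sequence of subtrees $(\mathbb{T}_n)_{n\ge1}$ defined recursively: $\mathbb{T}_1$ consists only of the root; given $\mathbb{T}_n$, a leaf $u$ of $\mathbb{T}_n$ is chosen uniformly at random among all leaves of $\mathbb{T}_n$, and $\mathbb{T}_{n+1}$ is $\mathbb{T}_n$ together with the two children of $u$. The generation of a node is its distance from the root (root has generation $0$); the height $H_n$ is the greatest generation of a node of $\mathbb{T}_n$. *)

theory Defs
  imports "HOL-Probability.Probability" "HOL-Library.List_Lexorder"
begin

text \<open>Nodes of the complete rooted binary tree are encoded as finite words over bool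
  (the root is the empty word, the children of u are u@[False] and u@[True]);
  the generation of a node is its length.\<close>

definition leaves :: "bool list set \<Rightarrow> bool list set" where
  "leaves T = {u \<in> T. u @ [False] \<notin> T \<and> u @ [True] \<notin> T}"

definition height :: "bool list set \<Rightarrow> nat" where
  "height T = Max (length ` T)"

definition fringe :: "bool list set \<Rightarrow> nat" where
  "fringe T = card {u \<in> leaves T. length u = height T}"

text \<open>Construction of the binary search tree from a sequence v of choices:
  grow v n is the tree T_(n+1), which has exactly n+1 leaves; the leaf that is split
  at this step is the (v n)-th leaf in lexicographic order. When v n is uniform on
  {0..<n+1} and independent of the past, the split leaf is uniform among the leaves.\<close>

fun grow :: "(nat \<Rightarrow> nat) \<Rightarrow> nat \<Rightarrow> bool list set" where
  "grow v 0 = {[]}"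
| "grow v (Suc n) =
     (let T = grow v n; u = sorted_list_of_set (leaves T) ! v n
      in T \<union> {u @ [False], u @ [True]})"

text \<open>The binary search tree T_n, n \<ge> 1 (T_0 is set equal to T_1 by convention).\<close>
definition bst :: "(nat \<Rightarrow> nat) \<Rightarrow> nat \<Rightarrow> bool list set" where
  "bst v n = grow v (n - 1)"

definition choice_space :: "(nat \<Rightarrow> nat) measure" where
  "choice_space = PiM UNIV (\<lambda>n. measure_pmf (pmf_of_set {0..<Suc n}))"

end

theory Submission
  imports Defs
begin


definition spl :: "bool list set \<Rightarrow> bool list \<Rightarrow> bool list set" where
  "spl T u = T \<union> {u @ [False], u @ [True]}"

lemma grow_Suc': "grow v (Suc n) = spl (grow v n) (sorted_list_of_set (leaves (grow v n)) ! v n)"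
  by (simp add: Let_def spl_def)

definition tinv :: "bool list set \<Rightarrow> bool" where
  "tinv T \<longleftrightarrow> finite T \<and> [] \<in> T \<and> (\<forall>u b. u @ [b] \<in> T \<longrightarrow> u \<in> T)
     \<and> (\<forall>u. u @ [False] \<in> T \<longleftrightarrow> u @ [True] \<in> T)"

lemma inv_prefix: assumes "tinv T" "x @ y \<in> T" shows "x \<in> T"
  using assms(2)
proof (induction y rule: rev_induct)
  case Nil then show ?case by simp
next
  case (snoc b y) then show ?case using assms(1) unfolding tinv_def
    by (metis append_assoc)
qed

lemma leaves_spl:
  assumes "tinv T" "u \<in> leaves T"
  shows "leaves (spl T u) = leaves T - {u} \<union> {u @ [False], u @ [True]}"
proof -
  have uT: "u \<in> T" "u @ [False] \<notin> T" "u @ [True] \<notin> T" using assms(2) by (auto simp: leaves_def)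
  have pc: "\<And>x b. x @ [b] \<in> T \<Longrightarrow> x \<in> T" using assms(1) by (auto simp: tinv_def)
  show ?thesis
  proof (intro set_eqI iffI)
    fix x assume "x \<in> leaves (spl T u)"
    then show "x \<in> leaves T - {u} \<union> {u @ [False], u @ [True]}"
      by (auto simp: leaves_def spl_def)
  next
    fix x assume x: "x \<in> leaves T - {u} \<union> {u @ [False], u @ [True]}"
    show "x \<in> leaves (spl T u)"
    proof (cases "x \<in> {u @ [False], u @ [True]}")
      case True
      then have "x @ [b] \<notin> T" for b using uT pc[of x b] by auto
      moreover have "x @ [b] \<noteq> u @ [c]" for b c using True by auto
      ultimately show ?thesis using True by (auto simp: leaves_def spl_def)
    next
      case False
      then have "x \<in> leaves T" "x \<noteq> u" using x by auto
      then show ?thesis by (auto simp: leaves_def spl_def)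
    qed
  qed
qed

lemma inv_spl: assumes "tinv T" "u \<in> leaves T" shows "tinv (spl T u)"
proof -
  have uT: "u \<in> T" using assms(2) by (auto simp: leaves_def)
  have a: "x @ [b] \<in> spl T u \<Longrightarrow> x \<in> spl T u" for x b
    using assms(1) uT unfolding tinv_def spl_def by auto
  have b: "x @ [False] \<in> spl T u \<longleftrightarrow> x @ [True] \<in> spl T u" for x
    using assms(1) unfolding tinv_def spl_def by auto
  show ?thesis using a b assms(1) unfolding tinv_def spl_def by auto
qed

lemma finite_leaves: "finite T \<Longrightarrow> finite (leaves T)"
  by (simp add: leaves_def)

lemma card_leaves_spl:
  assumes "tinv T" "u \<in> leaves T"
  shows "card (leaves (spl T u)) = Suc (card (leaves T))"
proof -
  have f: "finite (leaves T)" using assms(1) by (simp add: tinv_def finite_leaves)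
  have n: "u @ [False] \<notin> leaves T" "u @ [True] \<notin> leaves T"
    using assms(2) by (auto simp: leaves_def)
  have "card (leaves T - {u} \<union> {u @ [False], u @ [True]}) = card (leaves T - {u}) + 2"
    using f n by (subst card_Un_disjoint) auto
  also have "\<dots> = Suc (card (leaves T))" using f assms(2)
    by (simp add: card_Diff_singleton) (metis Suc_pred card_gt_0_iff emptyE)
  finally show ?thesis using leaves_spl[OF assms] by simp
qed

definition valid :: "(nat \<Rightarrow> nat) \<Rightarrow> nat \<Rightarrow> bool" where
  "valid w n \<longleftrightarrow> (\<forall>i<n. w i \<le> i)"

lemma grow_inv: "valid w n \<Longrightarrow> tinv (grow w n) \<and> card (leaves (grow w n)) = Suc n"
proof (induction n)
  case 0
  then show ?case by (auto simp: tinv_def leaves_def)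
next
  case (Suc n)
  let ?T = "grow w n"
  let ?xs = "sorted_list_of_set (leaves ?T)"
  have IH: "tinv ?T" "card (leaves ?T) = Suc n" using Suc by (auto simp: valid_def)
  have f: "finite (leaves ?T)" using IH by (simp add: tinv_def finite_leaves)
  have "w n < length ?xs" using Suc.prems IH f by (auto simp: valid_def le_imp_less_Suc)
  then have mem: "?xs ! w n \<in> leaves ?T" using f by (metis nth_mem set_sorted_list_of_set)
  show ?case unfolding grow_Suc' using inv_spl[OF IH(1) mem] card_leaves_spl[OF IH(1) mem] IH
    by simp
qed

lemma grow_cong: "(\<And>i. i < n \<Longrightarrow> v i = v' i) \<Longrightarrow> grow v n = grow v' n"
  by (induction n) (auto simp: Let_def)


lemma height_ge: "finite T \<Longrightarrow> u \<in> T \<Longrightarrow> length u \<le> height T"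
  unfolding height_def by simp

lemma height_ex: "finite T \<Longrightarrow> T \<noteq> {} \<Longrightarrow> \<exists>u\<in>T. length u = height T"
proof -
  assume "finite T" "T \<noteq> {}"
  then have "height T \<in> length ` T" unfolding height_def by (intro Max_in) auto
  then show ?thesis by auto
qed

definition FS :: "bool list set \<Rightarrow> bool list set" where
  "FS T = {u \<in> leaves T. length u = height T}"

lemma fringe_FS: "fringe T = card (FS T)" by (simp add: fringe_def FS_def)

lemma FS_eq: assumes "tinv T" shows "FS T = {u \<in> T. length u = height T}"
proof -
  have f: "finite T" using assms by (simp add: tinv_def)
  have "u @ [b] \<notin> T" if "u \<in> T" "length u = height T" for u b
    using height_ge[OF f, of "u @ [b]"] that by auto
  then show ?thesis unfolding FS_def leaves_def by auto
qed

lemma finite_FS: "tinv T \<Longrightarrow> finite (FS T)"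
  by (simp add: FS_def tinv_def finite_leaves)

lemma height_spl:
  assumes "tinv T" "u \<in> leaves T" "length u < height T"
  shows "height (spl T u) = height T"
proof -
  have f: "finite T" using assms by (simp add: tinv_def)
  have uT: "u \<in> T" using assms(2) by (simp add: leaves_def)
  obtain x where x: "x \<in> T" "length x = height T" using height_ex[OF f] uT by blast
  show ?thesis unfolding height_def[of "spl T u"]
  proof (rule Max_eqI)
    show "finite (length ` spl T u)" using f by (simp add: spl_def)
    show "y \<le> height T" if "y \<in> length ` spl T u" for y
      using that height_ge[OF f] assms(3) by (auto simp: spl_def)
    show "height T \<in> length ` spl T u" using x unfolding spl_def by (metis UnI1 image_eqI)
  qed
qed

lemma FS_spl:
  assumes "tinv T" "u \<in> leaves T" "length u < height T"
  shows "FS (spl T u) = FS T \<union> (if Suc (length u) = height T then {u @ [False], u @ [True]} else {})"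
proof -
  have "FS (spl T u) = {x \<in> spl T u. length x = height T}"
    unfolding FS_eq[OF inv_spl[OF assms(1,2)]] height_spl[OF assms] ..
  also have "\<dots> = {x \<in> T. length x = height T} \<union> (if Suc (length u) = height T then {u @ [False], u @ [True]} else {})"
    unfolding spl_def by auto
  finally show ?thesis unfolding FS_eq[OF assms(1)] .
qed

lemma fringe_spl:
  assumes "tinv T" "u \<in> leaves T" "length u < height T"
  shows "fringe (spl T u) = fringe T + (if Suc (length u) = height T then 2 else 0)"
proof -
  have n: "u @ [False] \<notin> FS T" "u @ [True] \<notin> FS T" using assms(2) by (auto simp: FS_def leaves_def)
  show ?thesis unfolding fringe_FS FS_spl[OF assms]
  proof (cases "Suc (length u) = height T")
    case True
    then show "card (FS T \<union> (if Suc (length u) = height T then {u @ [False], u @ [True]} else {})) =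
      card (FS T) + (if Suc (length u) = height T then 2 else 0)"
      using finite_FS[OF assms(1)] n by (simp add: card_Un_disjoint)
  qed simp
qed

lemma height_mono: "finite T' \<Longrightarrow> T \<subseteq> T' \<Longrightarrow> T \<noteq> {} \<Longrightarrow> height T \<le> height T'"
  unfolding height_def by (rule Max_mono) auto

lemma fringe_struct:
  assumes "tinv T" "k \<le> height T" "fringe T < 2 ^ k"
  shows "\<exists>l\<in>leaves T. height T - k \<le> length l \<and> length l < height T"
proof (rule ccontr)
  assume no: "\<not> ?thesis"
  have f: "finite T" and rT: "[] \<in> T" using assms(1) by (auto simp: tinv_def)
  obtain u where u: "u \<in> T" "length u = height T" using height_ex[OF f] rT by blast
  define a where "a = take (height T - k) u"
  have aT: "a \<in> T" using inv_prefix[OF assms(1), of a "drop (height T - k) u"] u(1)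
    by (simp add: a_def)
  have la: "length a = height T - k" using u(2) by (simp add: a_def)
  have sib: "x @ [False] \<in> T \<longleftrightarrow> x @ [True] \<in> T" for x using assms(1) by (simp add: tinv_def)
  have all: "length z \<le> k \<Longrightarrow> a @ z \<in> T" for z
  proof (induction z rule: rev_induct)
    case Nil then show ?case using aT by simp
  next
    case (snoc b z)
    then have az: "a @ z \<in> T" by simp
    have len: "length (a @ z) < height T" "height T - k \<le> length (a @ z)"
      using snoc.prems la assms(2) by auto
    have "a @ z \<notin> leaves T" using no len az by blast
    then have "(a @ z) @ [False] \<in> T \<or> (a @ z) @ [True] \<in> T" using az by (auto simp: leaves_def)
    then have "(a @ z) @ [b] \<in> T" using sib[of "a @ z"] by (cases b) auto
    then show ?case by simp
  qed
  have sub: "(\<lambda>z. a @ z) ` {z. set z \<subseteq> UNIV \<and> length z = k} \<subseteq> FS T"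
    using all la assms(2) FS_eq[OF assms(1)] by auto
  have "card ((\<lambda>z. a @ z) ` {z. set z \<subseteq> (UNIV::bool set) \<and> length z = k}) = 2 ^ k"
    using card_lists_length_eq[of "UNIV::bool set" k] by (subst card_image) (auto simp: inj_on_def)
  then have "2 ^ k \<le> fringe T" unfolding fringe_FS
    using card_mono[OF finite_FS[OF assms(1)] sub] by simp
  then show False using assms(3) by simp
qed

lemma card_height:
  assumes "tinv T" shows "card T < 2 ^ Suc (height T)"
proof -
  have f: "finite T" using assms by (simp add: tinv_def)
  have sub: "T \<subseteq> {xs. set xs \<subseteq> (UNIV::bool set) \<and> length xs \<le> height T}"
    using height_ge[OF f] by auto
  have c: "card {xs::bool list. length xs \<le> n} = (\<Sum>i\<le>n. 2 ^ i)" for n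
    using card_lists_length_le[of "UNIV::bool set" n] by simp
  have "card T \<le> (\<Sum>i\<le>height T. 2 ^ i)"
    using card_mono[OF finite_lists_length_le[of "UNIV::bool set"] sub] c by simp
  also have "(\<Sum>i\<le>n. (2::nat) ^ i) < 2 ^ Suc n" for n by (induction n) auto
  finally show ?thesis .
qed


definition NF :: "bool list set \<Rightarrow> bool list set" where
  "NF T = {l \<in> leaves T. length l < height T}"

definition gmax :: "bool list set \<Rightarrow> nat" where
  "gmax T = Max (length ` NF T)"

definition dd :: "nat \<Rightarrow> bool list set \<Rightarrow> nat" where
  "dd k T = k * (k - fringe T) + (height T - 1 - gmax T)"

definition desig :: "bool list set \<Rightarrow> bool list" where
  "desig T = (SOME l. l \<in> NF T \<and> length l = gmax T)"

lemma finite_NF: "tinv T \<Longrightarrow> finite (NF T)"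
  by (simp add: NF_def tinv_def finite_leaves)

lemma nf_ex:
  assumes "tinv T" "k \<le> height T" "fringe T < 2 ^ k"
  shows "height T - k \<le> gmax T" "gmax T < height T" "desig T \<in> NF T" "length (desig T) = gmax T"
proof -
  obtain l where l: "l \<in> leaves T" "height T - k \<le> length l" "length l < height T"
    using fringe_struct[OF assms] by blast
  have lN: "l \<in> NF T" using l by (simp add: NF_def)
  have f: "finite (length ` NF T)" using finite_NF[OF assms(1)] by simp
  have "gmax T \<in> length ` NF T" unfolding gmax_def using lN f by (intro Max_in) auto
  then obtain m where m: "m \<in> NF T" "length m = gmax T" by auto
  show "height T - k \<le> gmax T" unfolding gmax_def using l(2) lN f
    by (meson Max_ge image_eqI le_trans)
  show "gmax T < height T" using m by (auto simp: NF_def)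
  have "\<exists>l. l \<in> NF T \<and> length l = gmax T" using m by blast
  then have "desig T \<in> NF T \<and> length (desig T) = gmax T" unfolding desig_def by (rule someI_ex)
  then show "desig T \<in> NF T" "length (desig T) = gmax T" by auto
qed

lemma gmax_ge: "tinv T \<Longrightarrow> x \<in> NF T \<Longrightarrow> length x \<le> gmax T"
  unfolding gmax_def using finite_NF by simp

lemma NF_spl:
  assumes "tinv T" "l \<in> NF T" "Suc (length l) < height T"
  shows "NF (spl T l) = NF T - {l} \<union> {l @ [False], l @ [True]}"
proof -
  have lL: "l \<in> leaves T" "length l < height T" using assms(2) by (auto simp: NF_def)
  have lv: "\<And>x. x \<in> leaves T \<Longrightarrow> length x \<le> height T"
    using height_ge assms(1) by (auto simp: leaves_def tinv_def)
  show ?thesis unfolding NF_def leaves_spl[OF assms(1) lL(1)] height_spl[OF assms(1) lL]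
    using assms(3) lL by auto
qed

lemma dd_trans:
  assumes inv: "tinv T" and k1: "1 \<le> k" and kH: "k \<le> height T" and Fk: "fringe T < k"
    and lN: "l \<in> NF T" and F'k: "fringe (spl T l) < k"
  shows "dd k (spl T l) \<le> dd k T" "l = desig T \<Longrightarrow> dd k (spl T l) < dd k T"
proof -
  let ?T = "spl T l" and ?H = "height T" and ?F = "fringe T"
  have k2: "k < 2 ^ k" by (rule less_exp)
  have lL: "l \<in> leaves T" "length l < height T" using lN by (auto simp: NF_def)
  have inv': "tinv ?T" using inv_spl[OF inv lL(1)] .
  have H': "height ?T = ?H" using height_spl[OF inv lL] .
  have F': "fringe ?T = ?F + (if Suc (length l) = ?H then 2 else 0)" using fringe_spl[OF inv lL] .
  note N = nf_ex[OF inv kH order.strict_trans[OF Fk k2]]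
  note N' = nf_ex[OF inv' kH[folded H'] order.strict_trans[OF F'k k2]]
  have "dd k ?T \<le> dd k T \<and> (l = desig T \<longrightarrow> dd k ?T < dd k T)"
  proof (cases "Suc (length l) = ?H")
    case True
    then have F2: "fringe ?T = ?F + 2" using F' by simp
    have a: "height ?T - 1 - gmax ?T \<le> k - 1" using N'(1) H' by linarith
    have b: "k - ?F = (k - (?F + 2)) + 2" using F2 F'k by linarith
    have "dd k ?T \<le> k * (k - (?F + 2)) + (k - 1)" unfolding dd_def F2 using a by simp
    also have "\<dots> < k * (k - (?F + 2)) + 2 * k" using k1 by simp
    also have "\<dots> = k * (k - ?F)" by (subst b) (simp add: algebra_simps)
    also have "\<dots> \<le> dd k T" unfolding dd_def by simp
    finally have "dd k ?T < dd k T" .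
    then show ?thesis using less_imp_le by blast
  next
    case False
    then have F2: "fringe ?T = ?F" "Suc (length l) < ?H" using F' lL(2) by auto
    have NF': "NF ?T = NF T - {l} \<union> {l @ [False], l @ [True]}" using NF_spl[OF inv lN F2(2)] .
    have g1: "gmax T \<le> gmax ?T"
    proof (cases "l = desig T")
      case True
      have "l @ [False] \<in> NF ?T" unfolding NF' by simp
      then have "length (l @ [False]) \<le> gmax ?T" by (rule gmax_ge[OF inv'])
      then show ?thesis using N(4) True by simp
    next
      case False
      then have "desig T \<in> NF ?T" unfolding NF' using N(3) by simp
      then show ?thesis using gmax_ge[OF inv'] N(4) by metis
    qed
    have g2: "l = desig T \<Longrightarrow> Suc (gmax T) \<le> gmax ?T"
    proof -
      assume "l = desig T"
      have "l @ [False] \<in> NF ?T" unfolding NF' by simp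
      then have "length (l @ [False]) \<le> gmax ?T" by (rule gmax_ge[OF inv'])
      then show ?thesis using N(4) \<open>l = desig T\<close> by simp
    qed
    have g3: "gmax ?T < ?H" using N'(2) H' by simp
    show ?thesis unfolding dd_def F2 H' using g1 g2 g3 N(2) by auto
  qed
  then show "dd k ?T \<le> dd k T" "l = desig T \<Longrightarrow> dd k ?T < dd k T" by auto
qed


definition Pf :: "nat \<Rightarrow> nat \<Rightarrow> nat \<Rightarrow> real" where
  "Pf k E s = ((real s - real k) / real E) ^ k"

fun Qf :: "nat \<Rightarrow> nat \<Rightarrow> nat \<Rightarrow> real" where
  "Qf E 0 s = 1"
| "Qf E (Suc d) s = (\<Sum>r\<in>{s..<E}. Qf E d (Suc r)) / real E"

declare Qf.simps(2)[simp del]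

definition gg :: "nat \<Rightarrow> nat \<Rightarrow> nat \<Rightarrow> nat \<Rightarrow> real" where
  "gg k E d s = Pf k E s * Qf E d s"

lemma Qf_nonneg: "0 \<le> Qf E d s"
  by (induction d arbitrary: s) (auto intro!: sum_nonneg divide_nonneg_nonneg simp: Qf.simps)

lemma Qf_le1: "Qf E d s \<le> 1"
proof (induction d arbitrary: s)
  case 0 then show ?case by simp
next
  case (Suc d)
  have "(\<Sum>r\<in>{s..<E}. Qf E d (Suc r)) \<le> (\<Sum>r\<in>{s..<E}. 1)"
    by (rule sum_mono) (use Suc in auto)
  also have "\<dots> \<le> real E" by simp
  finally show ?case by (cases "E = 0") (auto simp: divide_le_eq Qf.simps)
qed

lemma Qf_mono: "Qf E (Suc d) s \<le> Qf E d s"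
proof (induction d arbitrary: s)
  case 0 then show ?case using Qf_le1[of E "Suc 0" s] by simp
next
  case (Suc d)
  have "(\<Sum>r\<in>{s..<E}. Qf E (Suc d) (Suc r)) \<le> (\<Sum>r\<in>{s..<E}. Qf E d (Suc r))"
    by (rule sum_mono) (use Suc in auto)
  then show ?case by (simp add: divide_right_mono Qf.simps)
qed

lemma Qf_mono': "d \<le> d' \<Longrightarrow> Qf E d' s \<le> Qf E d s"
proof (induction d' rule: dec_induct)
  case base then show ?case by simp
next
  case (step n) then show ?case using Qf_mono[of E n s] by linarith
qed

lemma Qf_step: "s < E \<Longrightarrow> Qf E (Suc d) s = Qf E d (Suc s) / real E + Qf E (Suc d) (Suc s)"
proof -
  assume "s < E"
  then have "{s..<E} = insert s {Suc s..<E}" by auto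
  then show ?thesis by (simp add: add_divide_distrib Qf.simps)
qed

lemma Qf_base: "Qf E (Suc d) E = 0" by (simp add: Qf.simps)

lemma Qf_low: "s + d * l \<le> E \<Longrightarrow> 0 < E \<Longrightarrow> (real l / real E) ^ d \<le> Qf E d s"
proof (induction d arbitrary: s)
  case 0 then show ?case by simp
next
  case (Suc d)
  have "(\<Sum>r\<in>{s..<s+l}. (real l / real E) ^ d) \<le> (\<Sum>r\<in>{s..<s+l}. Qf E d (Suc r))"
  proof (rule sum_mono)
    fix r assume "r \<in> {s..<s+l}"
    then have "Suc r + d * l \<le> E" using Suc.prems by (auto simp: algebra_simps)
    then show "(real l / real E) ^ d \<le> Qf E d (Suc r)" using Suc.IH Suc.prems by blast
  qed
  also have "\<dots> \<le> (\<Sum>r\<in>{s..<E}. Qf E d (Suc r))"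
    by (rule sum_mono2) (use Suc.prems in \<open>auto simp: Qf_nonneg\<close>)
  finally have S: "real l * (real l / real E) ^ d \<le> (\<Sum>r\<in>{s..<E}. Qf E d (Suc r))" by simp
  have "(real l / real E) ^ Suc d = real l * (real l / real E) ^ d / real E" by simp
  then show ?case unfolding Qf.simps(2) using divide_right_mono[OF S, of "real E"] by simp
qed

lemma bern_aux: "1 \<le> (x::real) \<Longrightarrow> (x - 1) ^ k * (x + real k) \<le> x ^ Suc k"
proof (induction k)
  case 0 then show ?case by simp
next
  case (Suc k)
  have i: "(x - 1) * (x + real (Suc k)) \<le> x * (x + real k)" using Suc.prems by (simp add: algebra_simps)
  have h0: "0 \<le> (x - 1) ^ k" using Suc.prems by simp
  have "(x - 1) ^ Suc k * (x + real (Suc k)) = (x - 1) ^ k * ((x - 1) * (x + real (Suc k)))"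
    by (simp add: algebra_simps)
  also have "\<dots> \<le> (x - 1) ^ k * (x * (x + real k))" by (rule mult_left_mono[OF i h0])
  also have "\<dots> = x * ((x - 1) ^ k * (x + real k))" by (simp add: algebra_simps)
  also have "\<dots> \<le> x * x ^ Suc k" using Suc by (intro mult_left_mono) auto
  finally show ?case by simp
qed

lemma Pf_nonneg: "k \<le> s \<Longrightarrow> 0 \<le> Pf k E s"
  by (simp add: Pf_def)

lemma Pf_le1: "k \<le> s \<Longrightarrow> s \<le> E \<Longrightarrow> Pf k E s \<le> 1"
  unfolding Pf_def by (rule power_le_one) (auto simp: divide_le_eq)

lemma Pf_step:
  assumes "k \<le> s"
  shows "Pf k E s * real (Suc s) \<le> real (Suc s - k) * Pf k E (Suc s)"
proof -
  define x where "x = real (Suc s - k)"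
  have x1: "1 \<le> x" using assms by (simp add: x_def)
  have xs: "real s - real k = x - 1" "real (Suc s) - real k = x" "real (Suc s) = x + real k"
    using assms by (auto simp: x_def of_nat_diff)
  have b: "(x - 1) ^ k * (x + real k) \<le> x * x ^ k" using bern_aux[OF x1, of k] by simp
  have e1: "Pf k E s = (x - 1) ^ k / real E ^ k" unfolding Pf_def xs(1) by (simp add: power_divide)
  have e2: "Pf k E (Suc s) = x ^ k / real E ^ k" unfolding Pf_def xs(2) by (simp add: power_divide)
  have "Pf k E s * real (Suc s) = ((x - 1) ^ k * (x + real k)) / real E ^ k"
    unfolding e1 xs(3) by simp
  also have "\<dots> \<le> (x * x ^ k) / real E ^ k" by (rule divide_right_mono[OF b]) simp
  also have "\<dots> = real (Suc s - k) * Pf k E (Suc s)" unfolding e2 x_def by simp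
  finally show ?thesis .
qed

lemma Pf_mono: "k \<le> s \<Longrightarrow> Pf k E s \<le> Pf k E (Suc s)"
  unfolding Pf_def by (intro power_mono divide_right_mono) auto

lemma gg_le1: "k \<le> s \<Longrightarrow> s \<le> E \<Longrightarrow> gg k E d s \<le> 1"
  unfolding gg_def by (intro mult_le_one Pf_le1 Qf_nonneg Qf_le1)

lemma gg_nonneg: "k \<le> s \<Longrightarrow> 0 \<le> gg k E d s"
  unfolding gg_def using Pf_nonneg Qf_nonneg by simp

lemma gg_mono: "k \<le> s \<Longrightarrow> d \<le> d' \<Longrightarrow> gg k E d' s \<le> gg k E d s"
  unfolding gg_def using Pf_nonneg Qf_mono' by (simp add: mult_left_mono)

lemma gg_base: "gg k E (Suc d) E = 0" by (simp add: gg_def Qf_base)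

lemma gg_step:
  assumes "k \<le> s" "s < E"
  shows "gg k E (Suc d) s * real (Suc s) \<le> gg k E d (Suc s) + real (Suc s - k) * gg k E (Suc d) (Suc s)"
proof -
  let ?P = "Pf k E s" and ?P' = "Pf k E (Suc s)"
  let ?a = "Qf E d (Suc s)" and ?b = "Qf E (Suc d) (Suc s)"
  have P0: "0 \<le> ?P" using assms by (simp add: Pf_nonneg)
  have a0: "0 \<le> ?a" "0 \<le> ?b" by (rule Qf_nonneg)+
  have E1: "real (Suc s) / real E \<le> 1" using assms by simp
  have "gg k E (Suc d) s * real (Suc s) = ?P * ?a * (real (Suc s) / real E) + (?P * real (Suc s)) * ?b"
    unfolding gg_def Qf_step[OF assms(2)] by (simp add: algebra_simps)
  also have "\<dots> \<le> ?P * ?a + (real (Suc s - k) * ?P') * ?b"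
  proof (rule add_mono)
    have "?P * ?a * (real (Suc s) / real E) \<le> ?P * ?a * 1"
      by (rule mult_left_mono[OF E1]) (use P0 a0 in simp)
    then show "?P * ?a * (real (Suc s) / real E) \<le> ?P * ?a" by simp
    show "?P * real (Suc s) * ?b \<le> real (Suc s - k) * ?P' * ?b"
      using Pf_step[OF assms(1)] a0 by (simp add: mult_right_mono)
  qed
  also have "\<dots> \<le> ?P' * ?a + (real (Suc s - k) * ?P') * ?b"
    using Pf_mono[OF assms(1)] a0 by (simp add: mult_right_mono)
  finally show ?thesis unfolding gg_def by (simp add: algebra_simps)
qed

lemma gg_low:
  assumes "2 * k \<le> t" "D \<le> t" "0 < D"
  shows "(1/4) ^ k * (1 / (4 * real D)) ^ D \<le> gg k (2 * t) D t"
proof -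
  have t0: "0 < t" using assms by auto
  define l where "l = t div D"
  have l1: "1 \<le> l" using div_le_mono[OF assms(2), of D] assms(3) by (simp add: l_def)
  have Dl: "D * l \<le> t" by (simp add: l_def)
  have "t < l * D + D" unfolding l_def using mod_less_divisor[OF assms(3), of t] div_mult_mod_eq[of t D]
    by linarith
  moreover have "D \<le> l * D" using l1 by simp
  ultimately have "t \<le> 2 * (l * D)" by linarith
  then have "real t \<le> real (2 * (l * D))" by (simp only: of_nat_le_iff)
  then have "real t \<le> 2 * real D * real l" by (simp add: mult_ac)
  then have q: "1 / (4 * real D) \<le> real l / real (2 * t)" using assms(3) t0
    by (simp add: field_simps)
  have "(1 / (4 * real D)) ^ D \<le> (real l / real (2 * t)) ^ D"
    by (rule power_mono[OF q]) simp
  also have "\<dots> \<le> Qf (2 * t) D t" by (rule Qf_low) (use Dl t0 in \<open>auto simp: mult.commute\<close>)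
  finally have Q: "(1 / (4 * real D)) ^ D \<le> Qf (2 * t) D t" .
  have "1 / 4 \<le> (real t - real k) / real (2 * t)" using assms(1) t0 by (simp add: field_simps)
  then have P: "(1/4) ^ k \<le> Pf k (2 * t) t" unfolding Pf_def by (rule power_mono) simp
  have "0 \<le> Pf k (2 * t) t" by (rule Pf_nonneg) (use assms in simp)
  then show ?thesis unfolding gg_def using mult_mono[OF P Q] by simp
qed


fun sp :: "nat \<Rightarrow> (nat \<Rightarrow> nat) \<Rightarrow> nat \<Rightarrow> nat \<Rightarrow> real" where
  "sp k w s 0 = (if k \<le> fringe (grow w s) then 1 else 0)"
| "sp k w s (Suc m) = (if k \<le> fringe (grow w s) then 1
     else (\<Sum>y<Suc s. sp k (w(s := y)) (Suc s) m) / real (Suc s))"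

lemma sp_bounds: "0 \<le> sp k w s m \<and> sp k w s m \<le> 1"
proof (induction m arbitrary: w s)
  case 0 then show ?case by simp
next
  case (Suc m)
  have "(\<Sum>y<Suc s. sp k (w(s := y)) (Suc s) m) \<le> (\<Sum>y<Suc s. 1)"
    by (rule sum_mono) (use Suc in auto)
  moreover have "0 \<le> (\<Sum>y<Suc s. sp k (w(s := y)) (Suc s) m)"
    by (rule sum_nonneg) (use Suc in auto)
  ultimately show ?case by (auto simp: divide_le_eq)
qed

declare grow.simps(2)[simp del]

lemma card_nth_filter:
  assumes "distinct xs"
  shows "card {y. y < length xs \<and> P (xs ! y)} = card {x \<in> set xs. P x}"
proof -
  have "(\<lambda>y. xs ! y) ` {y. y < length xs \<and> P (xs ! y)} = {x \<in> set xs. P x}"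
    by (auto simp: in_set_conv_nth)
  moreover have "inj_on (\<lambda>y. xs ! y) {y. y < length xs \<and> P (xs ! y)}"
    using assms by (auto simp: inj_on_def nth_eq_iff_index_eq)
  ultimately show ?thesis by (metis card_image)
qed

lemma grow_upd: "grow (w(s := y)) (Suc s) = spl (grow w s) (sorted_list_of_set (leaves (grow w s)) ! y)"
proof -
  have "grow (w(s := y)) s = grow w s" by (rule grow_cong) simp
  then show ?thesis unfolding grow_Suc'[of "w(s := y)" s] by simp
qed

lemma valid_upd: "valid w s \<Longrightarrow> y \<le> s \<Longrightarrow> valid (w(s := y)) (Suc s)"
  by (auto simp: valid_def less_Suc_eq)

lemma dd_pos: "\<not> k \<le> fringe T \<Longrightarrow> 1 \<le> k \<Longrightarrow> 1 \<le> dd k T"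
proof -
  assume a: "\<not> k \<le> fringe T" "1 \<le> k"
  then have "0 < k * (k - fringe T)" by simp
  then show ?thesis unfolding dd_def by linarith
qed

lemma sp_low:
  assumes k1: "1 \<le> k"
  shows "valid w s \<Longrightarrow> k \<le> s \<Longrightarrow> k \<le> height (grow w s) \<Longrightarrow> s + m = E \<Longrightarrow>
    gg k E (dd k (grow w s)) s \<le> sp k w s m"
proof (induction m arbitrary: w s)
  case 0
  show ?case
  proof (cases "k \<le> fringe (grow w s)")
    case True then show ?thesis using gg_le1[of k s E] 0 by simp
  next
    case False
    then have "1 \<le> dd k (grow w s)" using k1 by (rule dd_pos)
    then obtain d where "dd k (grow w s) = Suc d" by (cases "dd k (grow w s)") auto
    then show ?thesis using 0 False gg_base[of k E d] by simp
  qed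
next
  case (Suc m)
  let ?T = "grow w s"
  let ?xs = "sorted_list_of_set (leaves ?T)"
  have sE: "s < E" "Suc s \<le> E" using Suc.prems by auto
  show ?case
  proof (cases "k \<le> fringe ?T")
    case True then show ?thesis using gg_le1[of k s E] sE Suc.prems(2) by simp
  next
    case False
    have inv: "tinv ?T" and cl: "card (leaves ?T) = Suc s" using grow_inv[OF Suc.prems(1)] by auto
    have fl: "finite (leaves ?T)" using inv by (simp add: tinv_def finite_leaves)
    have dxs: "distinct ?xs" "set ?xs = leaves ?T" "length ?xs = Suc s"
      using fl cl by auto
    have dd1: "1 \<le> dd k ?T" using False k1 by (rule dd_pos)
    then obtain d where d: "dd k ?T = Suc d" by (cases "dd k ?T") auto
    have k2: "fringe ?T < 2 ^ k" using False less_exp[of k] by linarith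
    note N = nf_ex[OF inv Suc.prems(3) k2]
    have succ: "gg k E (dd k (grow (w(s := y)) (Suc s))) (Suc s) \<le> sp k (w(s := y)) (Suc s) m"
      and hT: "grow (w(s := y)) (Suc s) = spl ?T (?xs ! y)"
      and lL: "?xs ! y \<in> leaves ?T"
      if y: "y < Suc s" for y
    proof -
      show hT: "grow (w(s := y)) (Suc s) = spl ?T (?xs ! y)" by (rule grow_upd)
      show lL: "?xs ! y \<in> leaves ?T" using y dxs by (metis nth_mem)
      have "height ?T \<le> height (spl ?T (?xs ! y))"
        by (rule height_mono) (use inv in \<open>auto simp: spl_def tinv_def\<close>)
      then have kh: "k \<le> height (grow (w(s := y)) (Suc s))" unfolding hT using Suc.prems(3) by simp
      have v: "valid (w(s := y)) (Suc s)" using valid_upd[OF Suc.prems(1)] y by simp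
      show "gg k E (dd k (grow (w(s := y)) (Suc s))) (Suc s) \<le> sp k (w(s := y)) (Suc s) m"
        by (rule Suc.IH[OF v _ kh]) (use Suc.prems in simp_all)
    qed
    have A: "gg k E (dd k ?T) (Suc s) \<le> sp k (w(s := y)) (Suc s) m"
      and B: "?xs ! y = desig ?T \<Longrightarrow> gg k E d (Suc s) \<le> sp k (w(s := y)) (Suc s) m"
      if y: "y < Suc s" and yN: "?xs ! y \<in> NF ?T" for y
    proof -
      have "gg k E (dd k (grow (w(s := y)) (Suc s))) (Suc s) \<le> sp k (w(s := y)) (Suc s) m"
        using succ[OF y] .
      have k1': "k \<le> Suc s" using Suc.prems by simp
      show "gg k E (dd k ?T) (Suc s) \<le> sp k (w(s := y)) (Suc s) m"
      proof (cases "k \<le> fringe (grow (w(s := y)) (Suc s))")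
        case True
        then show ?thesis using gg_le1[OF k1' sE(2)] by (cases m) auto
      next
        case F': False
        have "dd k (spl ?T (?xs ! y)) \<le> dd k ?T"
          using dd_trans(1)[OF inv k1 Suc.prems(3) _ yN] False F' hT[OF y] by simp
        then show ?thesis using gg_mono[OF k1'] succ[OF y] hT[OF y] by (metis order_trans)
      qed
      assume des: "?xs ! y = desig ?T"
      show "gg k E d (Suc s) \<le> sp k (w(s := y)) (Suc s) m"
      proof (cases "k \<le> fringe (grow (w(s := y)) (Suc s))")
        case True
        then show ?thesis using gg_le1[OF k1' sE(2)] by (cases m) auto
      next
        case F': False
        have "dd k (spl ?T (?xs ! y)) < dd k ?T"
          using dd_trans(2)[OF inv k1 Suc.prems(3) _ yN] False F' hT[OF y] des by simp
        then have "dd k (spl ?T (?xs ! y)) \<le> d" using d by simp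
        then show ?thesis using gg_mono[OF k1'] succ[OF y] hT[OF y] by (metis order_trans)
      qed
    qed
    define Yd where "Yd = {y. y < length ?xs \<and> ?xs ! y = desig ?T}"
    define Yn where "Yn = {y. y < length ?xs \<and> ?xs ! y \<in> NF ?T - {desig ?T}}"
    have cYd: "card Yd = 1"
    proof -
      have "card Yd = card {x \<in> set ?xs. x = desig ?T}" unfolding Yd_def by (rule card_nth_filter[OF dxs(1)])
      also have "{x \<in> set ?xs. x = desig ?T} = {desig ?T}" using N(3) dxs(2) by (auto simp: NF_def)
      finally show ?thesis by simp
    qed
    have cYn: "Suc s - k \<le> card Yn"
    proof -
      have "card Yn = card {x \<in> set ?xs. x \<in> NF ?T - {desig ?T}}" unfolding Yn_def by (rule card_nth_filter[OF dxs(1)])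
      also have "{x \<in> set ?xs. x \<in> NF ?T - {desig ?T}} = NF ?T - {desig ?T}" using dxs(2) by (auto simp: NF_def)
      finally have c1: "card Yn = card (NF ?T) - 1" using N(3) finite_NF[OF inv] by (simp add: card_Diff_singleton)
      have lv: "\<And>x. x \<in> leaves ?T \<Longrightarrow> length x \<le> height ?T"
        using height_ge inv by (auto simp: leaves_def tinv_def)
      have "leaves ?T = NF ?T \<union> FS ?T" using lv by (auto simp: NF_def FS_def) (meson le_neq_implies_less)
      moreover have "NF ?T \<inter> FS ?T = {}" by (auto simp: NF_def FS_def)
      ultimately have "card (leaves ?T) = card (NF ?T) + card (FS ?T)"
        using finite_NF[OF inv] finite_FS[OF inv] by (simp add: card_Un_disjoint)
      then have "card (NF ?T) = Suc s - fringe ?T" using cl by (simp add: fringe_FS)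
      then show ?thesis using c1 False by simp
    qed
    have disj: "Yd \<inter> Yn = {}" unfolding Yd_def Yn_def by auto
    have sub: "Yd \<union> Yn \<subseteq> {..<Suc s}" unfolding Yd_def Yn_def using dxs(3) by auto
    have fin: "finite Yd" "finite Yn" unfolding Yd_def Yn_def by auto
    let ?f = "\<lambda>y. sp k (w(s := y)) (Suc s) m"
    have "gg k E d (Suc s) + real (Suc s - k) * gg k E (Suc d) (Suc s)
          \<le> (\<Sum>y\<in>Yd. gg k E d (Suc s)) + (\<Sum>y\<in>Yn. gg k E (Suc d) (Suc s))"
      using cYd cYn gg_nonneg[of k "Suc s" E "Suc d"] Suc.prems
      by (simp add: mult_right_mono)
    also have "\<dots> \<le> (\<Sum>y\<in>Yd. ?f y) + (\<Sum>y\<in>Yn. ?f y)"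
    proof (rule add_mono; rule sum_mono)
      fix y assume "y \<in> Yd"
      then show "gg k E d (Suc s) \<le> ?f y" using B N(3) dxs(3) unfolding Yd_def by auto
    next
      fix y assume "y \<in> Yn"
      then show "gg k E (Suc d) (Suc s) \<le> ?f y" using A dxs(3) d unfolding Yn_def by auto
    qed
    also have "\<dots> = (\<Sum>y\<in>Yd \<union> Yn. ?f y)" using disj fin by (simp add: sum.union_disjoint)
    also have "\<dots> \<le> (\<Sum>y<Suc s. ?f y)"
      by (rule sum_mono2) (use sub sp_bounds in auto)
    finally have S: "gg k E d (Suc s) + real (Suc s - k) * gg k E (Suc d) (Suc s) \<le> (\<Sum>y<Suc s. ?f y)" .
    have "gg k E (Suc d) s * real (Suc s) \<le> (\<Sum>y<Suc s. ?f y)"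
      using gg_step[of k s E d] Suc.prems S by linarith
    then have "gg k E (Suc d) s \<le> (\<Sum>y<Suc s. ?f y) / real (Suc s)"
      by (simp add: le_divide_eq)
    then show ?thesis using False d by simp
  qed
qed


definition W :: "nat \<Rightarrow> (nat \<Rightarrow> nat) set" where
  "W n = {u. (\<forall>i<n. u i \<le> i) \<and> (\<forall>i\<ge>n. u i = 0)}"

definition cut :: "nat \<Rightarrow> (nat \<Rightarrow> nat) \<Rightarrow> nat \<Rightarrow> nat" where
  "cut n v = (\<lambda>i. if i < n then v i else 0)"

definition Ext :: "(nat \<Rightarrow> nat) \<Rightarrow> nat \<Rightarrow> nat \<Rightarrow> (nat \<Rightarrow> nat) set" where
  "Ext w s m = {u \<in> W (s + m). cut s u = w}"

fun cE :: "nat \<Rightarrow> nat \<Rightarrow> nat" where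
  "cE s 0 = 1"
| "cE s (Suc m) = Suc s * cE (Suc s) m"

lemma W_valid: "u \<in> W n \<Longrightarrow> valid u n" by (simp add: W_def valid_def)

lemma cut_W: "u \<in> W (s + m) \<Longrightarrow> cut s u \<in> W s"
  by (auto simp: W_def cut_def)

lemma W_upd: "w \<in> W s \<Longrightarrow> y \<le> s \<Longrightarrow> w(s := y) \<in> W (Suc s)"
  by (auto simp: W_def less_Suc_eq)

lemma Ext_0: "w \<in> W s \<Longrightarrow> Ext w s 0 = {w}"
  by (auto simp: Ext_def W_def cut_def fun_eq_iff) (metis not_le)

lemma Ext_Suc:
  assumes "w \<in> W s"
  shows "Ext w s (Suc m) = (\<Union>y\<in>{..<Suc s}. Ext (w(s := y)) (Suc s) m)"
proof (intro set_eqI iffI)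
  fix u assume u: "u \<in> Ext w s (Suc m)"
  then have uW: "u \<in> W (Suc s + m)" and c: "cut s u = w" by (auto simp: Ext_def)
  have "u s \<le> s" using uW by (simp add: W_def)
  moreover have "cut (Suc s) u = w(s := u s)"
    using c assms by (auto simp: cut_def W_def fun_eq_iff less_Suc_eq)
  ultimately show "u \<in> (\<Union>y\<in>{..<Suc s}. Ext (w(s := y)) (Suc s) m)"
    using uW by (auto simp: Ext_def)
next
  fix u assume "u \<in> (\<Union>y\<in>{..<Suc s}. Ext (w(s := y)) (Suc s) m)"
  then obtain y where y0: "y < Suc s" "u \<in> Ext (w(s := y)) (Suc s) m" by blast
  then have y: "y \<le> s" "u \<in> W (Suc s + m)" "cut (Suc s) u = w(s := y)"
    by (auto simp: Ext_def)
  have "cut s u = w"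
  proof
    fix i show "cut s u i = w i"
      using fun_cong[OF y(3), of i] assms by (auto simp: cut_def W_def split: if_splits)
  qed
  then show "u \<in> Ext w s (Suc m)" using y by (simp add: Ext_def)
qed

lemma Ext_disj: "y \<noteq> y' \<Longrightarrow> Ext (w(s := y)) (Suc s) m \<inter> Ext (w(s := y')) (Suc s) m = {}"
  by (auto simp: Ext_def cut_def fun_eq_iff)

lemma finite_W: "finite (W n)"
proof -
  have "finite (PiE_dflt {..<n} 0 (\<lambda>_. {..n}))" by (intro finite_PiE_dflt) auto
  moreover have "W n \<subseteq> PiE_dflt {..<n} 0 (\<lambda>_. {..n})"
    by (force simp: W_def PiE_dflt_def)
  ultimately show ?thesis by (meson finite_subset)
qed

lemma finite_Ext: "finite (Ext w s m)"
  unfolding Ext_def using finite_W by simp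

lemma card_Ext: "w \<in> W s \<Longrightarrow> card (Ext w s m) = cE s m"
proof (induction m arbitrary: w s)
  case 0 then show ?case by (simp add: Ext_0)
next
  case (Suc m)
  have "card (Ext w s (Suc m)) = (\<Sum>y\<in>{..<Suc s}. card (Ext (w(s := y)) (Suc s) m))"
    unfolding Ext_Suc[OF Suc.prems] by (rule card_UN_disjoint) (auto simp: finite_Ext Ext_disj)
  also have "\<dots> = (\<Sum>y\<in>{..<Suc s}. cE (Suc s) m)"
    by (rule sum.cong) (auto intro!: Suc.IH W_upd[OF Suc.prems] simp: less_Suc_eq_le)
  finally show ?case by simp
qed

lemma W_split: "W (s + m) = (\<Union>w\<in>W s. Ext w s m)"
  by (auto simp: Ext_def cut_W)

lemma Ext_disj2: "w \<noteq> w' \<Longrightarrow> Ext w s m \<inter> Ext w' s m = {}"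
  by (auto simp: Ext_def)

lemma card_split:
  "card {u \<in> W (s + m). P u} = (\<Sum>w\<in>W s. card {u \<in> Ext w s m. P u})"
proof -
  have "{u \<in> W (s + m). P u} = (\<Union>w\<in>W s. {u \<in> Ext w s m. P u})"
    using W_split[of s m] by auto
  then show ?thesis
    by (simp only:) (rule card_UN_disjoint, auto simp: finite_W finite_Ext Ext_def)
qed

lemma card_W: "card (W (s + m)) = card (W s) * cE s m"
proof -
  have "card (W (s + m)) = (\<Sum>w\<in>W s. card (Ext w s m))"
    using card_split[of s m "\<lambda>_. True"] by simp
  also have "\<dots> = (\<Sum>w\<in>W s. cE s m)" by (rule sum.cong) (simp_all add: card_Ext)
  finally show ?thesis by simp
qed

definition fail :: "nat \<Rightarrow> nat \<Rightarrow> nat \<Rightarrow> (nat \<Rightarrow> nat) \<Rightarrow> bool" where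
  "fail k a b u \<longleftrightarrow> (\<forall>r\<in>{a..b}. \<not> k \<le> fringe (grow u r))"

lemma grow_cut: "r \<le> s \<Longrightarrow> grow (cut s u) r = grow u r"
  by (rule grow_cong) (simp add: cut_def)

lemma card_fail:
  "w \<in> W s \<Longrightarrow> real (card {u \<in> Ext w s m. fail k s (s + m) u}) = (1 - sp k w s m) * real (cE s m)"
proof (induction m arbitrary: w s)
  case 0
  show ?case
  proof (cases "k \<le> fringe (grow w s)")
    case True then show ?thesis using 0 by (simp add: Ext_0 fail_def)
  next
    case False
    then have "{u \<in> Ext w s 0. fail k s (s + 0) u} = {w}" using 0 by (auto simp: Ext_0 fail_def)
    then show ?thesis using False by simp
  qed
next
  case (Suc m)
  have gu: "grow u s = grow w s" if "u \<in> Ext w s (Suc m)" for u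
    using that grow_cut[of s s u] by (auto simp: Ext_def)
  show ?case
  proof (cases "k \<le> fringe (grow w s)")
    case True
    have e: "{u \<in> Ext w s (Suc m). fail k s (s + Suc m) u} = {}"
    proof -
      have "\<not> fail k s (s + Suc m) u" if "u \<in> Ext w s (Suc m)" for u
        unfolding fail_def using gu[OF that] True by (metis atLeastAtMost_iff le_add1 order_refl)
      then show ?thesis by blast
    qed
    show ?thesis unfolding e using True by simp
  next
    case False
    have fs: "fail k s (s + Suc m) u \<longleftrightarrow> fail k (Suc s) (Suc s + m) u" if "u \<in> Ext w s (Suc m)" for u
    proof -
      have "{s..s + Suc m} = insert s {Suc s..Suc s + m}" by auto
      then show ?thesis using gu[OF that] False by (simp add: fail_def)
    qed
    have "{u \<in> Ext w s (Suc m). fail k s (s + Suc m) u} =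
          (\<Union>y\<in>{..<Suc s}. {u \<in> Ext (w(s := y)) (Suc s) m. fail k (Suc s) (Suc s + m) u})"
      using fs unfolding Ext_Suc[OF Suc.prems] by blast
    then have "card {u \<in> Ext w s (Suc m). fail k s (s + Suc m) u} =
          (\<Sum>y\<in>{..<Suc s}. card {u \<in> Ext (w(s := y)) (Suc s) m. fail k (Suc s) (Suc s + m) u})"
      by (simp only:) (rule card_UN_disjoint, auto simp: finite_Ext, (metis (no_types, lifting) Ext_disj disjoint_iff)+)
    then have "real (card {u \<in> Ext w s (Suc m). fail k s (s + Suc m) u}) =
          (\<Sum>y\<in>{..<Suc s}. real (card {u \<in> Ext (w(s := y)) (Suc s) m. fail k (Suc s) (Suc s + m) u}))"
      by simp
    also have "\<dots> = (\<Sum>y\<in>{..<Suc s}. (1 - sp k (w(s := y)) (Suc s) m) * real (cE (Suc s) m))"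
      by (rule sum.cong[OF refl], rule Suc.IH, rule W_upd[OF Suc.prems]) auto
    also have "\<dots> = (real (Suc s) - (\<Sum>y<Suc s. sp k (w(s := y)) (Suc s) m)) * real (cE (Suc s) m)"
      by (simp only: sum_distrib_right[symmetric] sum_subtractf) simp
    also have "\<dots> = (1 - sp k w s (Suc m)) * real (cE s (Suc m))"
      using False by (simp add: field_simps)
    finally show ?thesis .
  qed
qed


abbreviation "MM \<equiv> (\<lambda>n::nat. measure_pmf (pmf_of_set {0..<Suc n}))"

lemma ps_choice: "prob_space choice_space"
  unfolding choice_space_def by (rule prob_space_PiM) (simp add: measure_pmf.prob_space_axioms)

lemma space_choice: "space choice_space = UNIV"
  unfolding choice_space_def by (simp add: space_PiM PiE_UNIV_domain)

definition C :: "nat \<Rightarrow> (nat \<Rightarrow> nat) \<Rightarrow> (nat \<Rightarrow> nat) set" where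
  "C n u = {v. \<forall>i<n. v i = u i}"

lemma C_emb: "C n u = prod_emb UNIV MM {..<n} (PiE {..<n} (\<lambda>i. {u i}))"
proof -
  have "prod_emb UNIV MM {..<n} (PiE {..<n} (\<lambda>i. {u i})) = Pi UNIV (\<lambda>i. if i \<in> {..<n} then {u i} else UNIV)"
    by (subst prod_emb_PiE) (auto simp: PiE_UNIV_domain Pi_iff split: if_splits)
  also have "\<dots> = C n u" by (auto simp: C_def Pi_iff split: if_splits)
  finally show ?thesis ..
qed

lemma C_sets: "C n u \<in> sets choice_space"
  unfolding C_emb choice_space_def by (rule sets_PiM_I) auto

lemma emeasure_C:
  assumes "u \<in> W n"
  shows "emeasure choice_space (C n u) = ennreal (\<Prod>i<n. 1 / real (Suc i))"
proof -
  have "emeasure choice_space (C n u) = (\<Prod>i<n. emeasure (MM i) {u i})"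
    unfolding C_emb choice_space_def
    by (rule emeasure_PiM_emb) (auto simp: measure_pmf.prob_space_axioms)
  also have "\<dots> = (\<Prod>i<n. ennreal (1 / real (Suc i)))"
  proof (rule prod.cong[OF refl])
    fix i assume "i \<in> {..<n}"
    then have "u i \<in> {0..<Suc i}" using assms by (auto simp: W_def le_imp_less_Suc)
    then show "emeasure (MM i) {u i} = ennreal (1 / real (Suc i))"
      by (simp add: emeasure_pmf_single)
  qed
  also have "\<dots> = ennreal (\<Prod>i<n. 1 / real (Suc i))" by (rule prod_ennreal) simp
  finally show ?thesis .
qed

lemma card_W_prod: "real (card (W n)) * (\<Prod>i<n. 1 / real (Suc i)) = 1"
proof (induction n)
  case 0
  have "W 0 = {\<lambda>_. 0}" by (auto simp: W_def)
  then show ?case by simp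
next
  case (Suc n)
  have "card (W (Suc n)) = card (W n) * Suc n" using card_W[of n 1] by simp
  then show ?case using Suc by (simp add: field_simps)
qed

lemma measure_C: "u \<in> W n \<Longrightarrow> measure choice_space (C n u) = 1 / real (card (W n))"
proof -
  assume u: "u \<in> W n"
  have "measure choice_space (C n u) = (\<Prod>i<n. 1 / real (Suc i))"
    using emeasure_C[OF u] by (simp add: measure_def prod_nonneg)
  also have "\<dots> = 1 / real (card (W n))"
  proof -
    have h: "real (card (W n)) * (\<Prod>i<n. 1 / real (Suc i)) = 1" by (rule card_W_prod)
    then have "real (card (W n)) \<noteq> 0" by (metis mult_zero_left zero_neq_one)
    then show ?thesis using h by (simp add: field_simps)
  qed
  finally show ?thesis .
qed

definition Z :: "nat \<Rightarrow> (nat \<Rightarrow> nat) set" where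
  "Z n = {v. \<exists>i<n. i < v i}"

lemma Z_null: "Z n \<in> null_sets choice_space"
proof -
  have eq: "Z n = (\<Union>i\<in>{..<n}. prod_emb UNIV MM {i} (PiE {i} (\<lambda>_. {x. i < x})))"
  proof -
    have e: "prod_emb UNIV MM {i} (PiE {i} (\<lambda>_. {x. i < x})) = {v. i < v i}" for i
    proof -
      have "prod_emb UNIV MM {i} (PiE {i} (\<lambda>_. {x. i < x})) = Pi UNIV (\<lambda>j. if j \<in> {i} then {x. i < x} else UNIV)"
        by (subst prod_emb_PiE) (auto simp: PiE_UNIV_domain Pi_iff split: if_splits)
      also have "\<dots> = {v. i < v i}" by (auto simp: Pi_iff split: if_splits)
      finally show ?thesis .
    qed
    show ?thesis unfolding e by (auto simp: Z_def)
  qed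
  show ?thesis unfolding eq
  proof (rule null_sets_UN')
    fix i assume "i \<in> {..<n}"
    have s: "prod_emb UNIV MM {i} (PiE {i} (\<lambda>_. {x. i < x})) \<in> sets choice_space"
      unfolding choice_space_def by (rule sets_PiM_I) auto
    have "emeasure choice_space (prod_emb UNIV MM {i} (PiE {i} (\<lambda>_. {x. i < x}))) = emeasure (MM i) {x. i < x}"
      unfolding choice_space_def
      by (subst emeasure_PiM_emb) (auto simp: measure_pmf.prob_space_axioms)
    also have "\<dots> = 0"
    proof -
      have "set_pmf (pmf_of_set {0..<Suc i}) \<inter> {x. i < x} = {}" by auto
      then have "measure (MM i) {x. i < x} = 0" by (simp only: measure_pmf_zero_iff)
      then show ?thesis by (simp add: measure_pmf.emeasure_eq_measure)
    qed
    finally show "prod_emb UNIV MM {i} (PiE {i} (\<lambda>_. {x. i < x})) \<in> null_sets choice_space"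
      using s by (simp add: null_sets_def)
  qed simp
qed

lemma countable_fix: "countable {u :: nat \<Rightarrow> nat. cut n u = u}"
proof -
  have "{u :: nat \<Rightarrow> nat. cut n u = u} \<subseteq> (\<lambda>xs i. if i < n then xs ! i else 0) ` {xs. length xs = n}"
  proof
    fix u :: "nat \<Rightarrow> nat" assume "u \<in> {u. cut n u = u}"
    then have h: "\<And>i. (if i < n then u i else 0) = u i" by (simp add: cut_def fun_eq_iff)
    have "u = (\<lambda>i. if i < n then map u [0..<n] ! i else 0)"
    proof
      fix i show "u i = (if i < n then map u [0..<n] ! i else 0)"
        using h[of i] by (cases "i < n") auto
    qed
    then show "u \<in> (\<lambda>xs i. if i < n then xs ! i else 0) ` {xs. length xs = n}" by force
  qed
  moreover have "countable ((\<lambda>xs i. if i < n then xs ! i else 0) ` {xs :: nat list. length xs = n})"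
    by (rule countable_image) simp
  ultimately show ?thesis by (rule countable_subset)
qed

lemma cut_sets: "{v. Q (cut n v)} \<in> sets choice_space"
proof -
  have "{v. Q (cut n v)} = (\<Union>u\<in>{u. cut n u = u \<and> Q u}. C n u)"
  proof (intro set_eqI iffI)
    fix v assume "v \<in> {v. Q (cut n v)}"
    moreover have "v \<in> C n (cut n v)" "cut n (cut n v) = cut n v" by (auto simp: C_def cut_def)
    ultimately show "v \<in> (\<Union>u\<in>{u. cut n u = u \<and> Q u}. C n u)" by blast
  next
    fix v assume "v \<in> (\<Union>u\<in>{u. cut n u = u \<and> Q u}. C n u)"
    then obtain u where u: "cut n u = u" "Q u" "v \<in> C n u" by blast
    have "cut n v = u"
    proof
      fix i show "cut n v i = u i"
        using u(3) fun_cong[OF u(1), of i] by (cases "i < n") (auto simp: C_def cut_def)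
    qed
    then show "v \<in> {v. Q (cut n v)}" using u by simp
  qed
  also have "\<dots> \<in> sets choice_space"
  proof (rule sets.countable_UN')
    show "countable {u. cut n u = u \<and> Q u}" by (rule countable_subset[OF _ countable_fix[of n]]) blast
    show "C n ` {u. cut n u = u \<and> Q u} \<subseteq> sets choice_space" using C_sets by blast
  qed
  finally show ?thesis .
qed

lemma measure_cut_le:
  "measure choice_space {v. Q (cut n v)} \<le> real (card {u \<in> W n. Q u}) / real (card (W n))"
proof -
  interpret P: prob_space choice_space by (rule ps_choice)
  have sub: "{v. Q (cut n v)} \<subseteq> (\<Union>u\<in>{u \<in> W n. Q u}. C n u) \<union> Z n"
  proof
    fix v assume v: "v \<in> {v. Q (cut n v)}"
    show "v \<in> (\<Union>u\<in>{u \<in> W n. Q u}. C n u) \<union> Z n"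
    proof (cases "v \<in> Z n")
      case False
      then have "cut n v \<in> W n" unfolding Z_def W_def cut_def by (auto simp: not_less) (meson not_le)
      moreover have "v \<in> C n (cut n v)" by (simp add: C_def cut_def)
      ultimately show ?thesis using v by blast
    qed simp
  qed
  have fin: "finite {u \<in> W n. Q u}" using finite_W by simp
  have Us: "(\<Union>u\<in>{u \<in> W n. Q u}. C n u) \<in> sets choice_space"
    by (rule sets.finite_UN[OF fin]) (rule C_sets)
  have Zs: "Z n \<in> sets choice_space" by (rule null_setsD2[OF Z_null])
  have "measure choice_space {v. Q (cut n v)} \<le> measure choice_space ((\<Union>u\<in>{u \<in> W n. Q u}. C n u) \<union> Z n)"
    by (rule P.finite_measure_mono[OF sub]) (rule sets.Un[OF Us Zs])
  also have "\<dots> \<le> measure choice_space (\<Union>u\<in>{u \<in> W n. Q u}. C n u) + measure choice_space (Z n)"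
    by (rule measure_Un_le[OF Us Zs])
  also have "measure choice_space (Z n) = 0" using Z_null by (simp add: measure_def null_setsD1)
  also have "measure choice_space (\<Union>u\<in>{u \<in> W n. Q u}. C n u) \<le> (\<Sum>u\<in>{u \<in> W n. Q u}. measure choice_space (C n u))"
    by (rule measure_subadditive_finite) (use fin C_sets in \<open>auto simp: P.emeasure_eq_measure\<close>)
  also have "\<dots> = (\<Sum>u\<in>{u \<in> W n. Q u}. 1 / real (card (W n)))"
    by (rule sum.cong) (auto simp: measure_C)
  finally show ?thesis by simp
qed


definition DD :: "nat \<Rightarrow> nat" where "DD k = k * k + k"
definition del :: "nat \<Rightarrow> real" where "del k = (1/4) ^ k * (1 / (4 * real (DD k))) ^ DD k"
definition N0 :: "nat \<Rightarrow> nat" where "N0 k = 2 ^ Suc k + 2 * k + DD k"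

lemma del_pos: "1 \<le> k \<Longrightarrow> 0 < del k"
proof -
  assume "1 \<le> k"
  then have "0 < DD k" by (simp add: DD_def)
  then have "0 < real (DD k)" by simp
  then show ?thesis unfolding del_def by (intro mult_pos_pos zero_less_power) auto
qed

lemma del_le1: "del k \<le> 1"
proof -
  have "(1/4::real) ^ k \<le> 1" by (rule power_le_one) auto
  moreover have "(1 / (4 * real (DD k))) ^ DD k \<le> 1"
  proof (rule power_le_one)
    show "1 / (4 * real (DD k)) \<le> 1" by (cases "DD k") (auto simp: field_simps)
  qed simp
  ultimately show ?thesis unfolding del_def by (simp add: mult_le_one)
qed

lemma height_big:
  assumes "valid w t" "2 ^ Suc k \<le> Suc t"
  shows "k \<le> height (grow w t)"
proof -
  have inv: "tinv (grow w t)" and cl: "card (leaves (grow w t)) = Suc t" using grow_inv[OF assms(1)] by auto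
  have "card (leaves (grow w t)) \<le> card (grow w t)"
    using inv by (intro card_mono) (auto simp: tinv_def leaves_def)
  then have "(2::nat) ^ Suc k < 2 ^ Suc (height (grow w t))" using card_height[OF inv] cl assms(2) by linarith
  then show ?thesis by simp
qed

lemma sp_delta:
  assumes k1: "1 \<le> k" and w: "w \<in> W t" and t: "N0 k \<le> t"
  shows "del k \<le> sp k w t t"
proof -
  let ?T = "grow w t"
  have v: "valid w t" using W_valid[OF w] .
  have inv: "tinv ?T" using grow_inv[OF v] by simp
  have kH: "k \<le> height ?T" by (rule height_big[OF v]) (use t in \<open>simp add: N0_def\<close>)
  have kt: "k \<le> t" "2 * k \<le> t" "DD k \<le> t" using t by (auto simp: N0_def DD_def)
  show ?thesis
  proof (cases "k \<le> fringe ?T")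
    case True
    then have "sp k w t t = 1" by (cases t) auto
    then show ?thesis using del_le1 by simp
  next
    case False
    have k2: "fringe ?T < 2 ^ k" using False less_exp[of k] by linarith
    note N = nf_ex[OF inv kH k2]
    have "height ?T - 1 - gmax ?T \<le> k - 1" using N(1) N(2) by linarith
    moreover have "k * (k - fringe ?T) \<le> k * k" by simp
    ultimately have ddD: "dd k ?T \<le> DD k" unfolding dd_def DD_def by linarith
    have "del k \<le> gg k (2 * t) (DD k) t" unfolding del_def
      by (rule gg_low) (use kt k1 in \<open>auto simp: DD_def\<close>)
    also have "\<dots> \<le> gg k (2 * t) (dd k ?T) t" by (rule gg_mono[OF kt(1) ddD])
    also have "\<dots> \<le> sp k w t t" by (rule sp_low[OF k1 v kt(1) kH]) simp
    finally show ?thesis .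
  qed
qed

lemma fail_cut: "b \<le> E \<Longrightarrow> fail k a b (cut E u) = fail k a b u"
  unfolding fail_def using grow_cut by (metis atLeastAtMost_iff order_trans)

lemma ratio:
  assumes k1: "1 \<le> k" and N: "N0 k \<le> N"
  shows "real (card {u \<in> W (N * 2 ^ r). fail k N (N * 2 ^ r) u}) \<le> (1 - del k) ^ r * real (card (W (N * 2 ^ r)))"
proof (induction r)
  case 0
  have "card {u \<in> W (N * 2 ^ 0). fail k N (N * 2 ^ 0) u} \<le> card (W (N * 2 ^ 0))"
    by (rule card_mono[OF finite_W]) auto
  then show ?case by simp
next
  case (Suc r)
  define E where "E = N * 2 ^ r"
  have E2: "N * 2 ^ Suc r = E + E" by (simp add: E_def)
  have NE: "N \<le> E" by (simp add: E_def)
  have tE: "N0 k \<le> E" using N NE by simp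
  have split: "{u \<in> Ext w E E. fail k N (E + E) u} =
     (if fail k N E w then {u \<in> Ext w E E. fail k E (E + E) u} else {})" for w
  proof -
    have "fail k N (E + E) u \<longleftrightarrow> fail k N E w \<and> fail k E (E + E) u" if "u \<in> Ext w E E" for u
    proof -
      have cw: "cut E u = w" using that by (simp add: Ext_def)
      have "fail k N E w = fail k N E u" using fail_cut[of E E k N u] cw by simp
      moreover have "{N..E + E} = {N..E} \<union> {E..E + E}" using NE by auto
      ultimately show ?thesis unfolding fail_def by auto
    qed
    then show ?thesis by auto
  qed
  have hterm: "real (card {u \<in> Ext w E E. fail k N (E + E) u}) \<le>
      (if fail k N E w then (1 - del k) * real (cE E E) else 0)" if w: "w \<in> W E" for w
  proof (cases "fail k N E w")
    case True
    have "real (card {u \<in> Ext w E E. fail k E (E + E) u}) = (1 - sp k w E E) * real (cE E E)"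
      by (rule card_fail[OF w])
    also have "\<dots> \<le> (1 - del k) * real (cE E E)"
      using sp_delta[OF k1 w tE] by (intro mult_right_mono) auto
    finally show ?thesis using True split[of w] by simp
  qed (use split in simp)
  have "real (card {u \<in> W (E + E). fail k N (E + E) u}) =
        (\<Sum>w\<in>W E. real (card {u \<in> Ext w E E. fail k N (E + E) u}))"
    by (simp add: card_split)
  also have "\<dots> \<le> (\<Sum>w\<in>W E. if fail k N E w then (1 - del k) * real (cE E E) else 0)"
    by (rule sum_mono) (rule hterm)
  also have "\<dots> = real (card {w \<in> W E. fail k N E w}) * ((1 - del k) * real (cE E E))"
    using finite_W by (simp add: sum.If_cases Int_def)
  also have "\<dots> \<le> ((1 - del k) ^ r * real (card (W E))) * ((1 - del k) * real (cE E E))"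
    using Suc.IH del_le1 unfolding E_def by (intro mult_right_mono) auto
  also have "\<dots> = (1 - del k) ^ Suc r * real (card (W (E + E)))"
    by (simp add: card_W)
  finally show ?case unfolding E2 .
qed

lemma grow_sets: "{v. Q (grow v m)} \<in> sets choice_space"
proof -
  have "{v. Q (grow v m)} = {v. Q (grow (cut m v) m)}" using grow_cut[of m m] by simp
  then show ?thesis using cut_sets[of "\<lambda>u. Q (grow u m)" m] by simp
qed

lemma S_null:
  assumes k1: "1 \<le> k" and N: "N0 k \<le> N"
  shows "{v. \<forall>m\<ge>N. \<not> k \<le> fringe (grow v m)} \<in> null_sets choice_space"
proof -
  interpret P: prob_space choice_space by (rule ps_choice)
  let ?S = "{v. \<forall>m\<ge>N. \<not> k \<le> fringe (grow v m)}"
  have eq: "?S = (\<Inter>m\<in>{N..}. {v. \<not> k \<le> fringe (grow v m)})" by auto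
  have Ss: "?S \<in> sets choice_space" unfolding eq
    by (rule sets.countable_INT'') (auto intro: grow_sets[of "\<lambda>T. \<not> k \<le> fringe T", simplified] simp: space_choice[symmetric])
  have le: "measure choice_space ?S \<le> (1 - del k) ^ r" for r
  proof -
    let ?E = "N * 2 ^ r"
    have "?S \<subseteq> {v. fail k N ?E (cut ?E v)}"
      unfolding fail_cut[OF order_refl] by (auto simp: fail_def)
    then have "measure choice_space ?S \<le> measure choice_space {v. fail k N ?E (cut ?E v)}"
      by (intro P.finite_measure_mono cut_sets)
    also have "\<dots> \<le> real (card {u \<in> W ?E. fail k N ?E u}) / real (card (W ?E))"
      by (rule measure_cut_le)
    also have "\<dots> \<le> (1 - del k) ^ r"
    proof (cases "card (W ?E) = 0")
      case False
      then show ?thesis using ratio[OF k1 N, of r] by (simp add: divide_le_eq)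
    qed (use del_le1[of k] in simp)
    finally show ?thesis .
  qed
  have lim: "(\<lambda>r. (1 - del k) ^ r) \<longlonglongrightarrow> 0"
    by (rule LIMSEQ_power_zero) (use del_pos[OF k1] del_le1[of k] in simp)
  have "measure choice_space ?S \<le> 0"
    by (rule LIMSEQ_le_const[OF lim]) (use le in blast)
  then have "emeasure choice_space ?S = 0"
    by (simp add: P.emeasure_eq_measure measure_nonneg antisym)
  then show ?thesis using Ss by (simp add: null_sets_def)
qed

lemma limsup_inf:
  assumes "\<And>k N. 1 \<le> k \<Longrightarrow> \<exists>m\<ge>N. k \<le> fringe (grow v m)"
  shows "limsup (\<lambda>n. ereal (real (fringe (bst v n)))) = \<infinity>"
proof -
  have "(SUP m\<in>{n..}. ereal (real (fringe (bst v m)))) = \<infinity>" for n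
  proof -
    have "\<exists>i\<in>{n..}. x < ereal (real (fringe (bst v i)))" if "x < \<infinity>" for x
    proof -
      have "x \<noteq> \<infinity>" using that by (rule less_imp_neq)
      then have "\<exists>j::nat. x < ereal (real j)" by (rule less_PInf_Ex_of_nat[THEN iffD1])
      then obtain j :: nat where j: "x < ereal (real j)" by (elim exE)
      have "\<exists>m\<ge>n. Suc j \<le> fringe (grow v m)" by (rule assms) simp
      then obtain m where m: "m \<ge> n" "Suc j \<le> fringe (grow v m)" by (elim exE conjE)
      have b: "fringe (bst v (Suc m)) = fringe (grow v m)" by (simp add: bst_def)
      have "real j < real (fringe (grow v m))" using m(2) by simp
      then have jj: "ereal (real j) < ereal (real (fringe (bst v (Suc m))))" unfolding b by simp
      have "x < ereal (real (fringe (bst v (Suc m))))" using j jj by (rule order.strict_trans)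
      moreover have "Suc m \<in> {n..}" using m(1) by simp
      ultimately show ?thesis by blast
    qed
    then show ?thesis by (simp add: top_ereal_def[symmetric])
  qed
  then show ?thesis by (simp add: limsup_INF_SUP)
qed

theorem proposition3:
  shows "AE v in choice_space.
           limsup (\<lambda>n. ereal (real (fringe (bst v n)))) = \<infinity>"
proof (rule AE_I')
  let ?B = "\<Union>k\<in>{1..}. \<Union>N. {v. \<forall>m\<ge>max N (N0 k). \<not> k \<le> fringe (grow v m)}"
  show "?B \<in> null_sets choice_space"
    by (intro null_sets_UN' S_null) auto
  show "{v \<in> space choice_space. \<not> limsup (\<lambda>n. ereal (real (fringe (bst v n)))) = \<infinity>} \<subseteq> ?B"
  proof (rule subsetI, rule ccontr)
    fix v assume v: "v \<in> {v \<in> space choice_space. \<not> limsup (\<lambda>n. ereal (real (fringe (bst v n)))) = \<infinity>}"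
      and nB: "v \<notin> ?B"
    have "\<exists>m\<ge>N. k \<le> fringe (grow v m)" if "1 \<le> k" for k N
    proof -
      have "v \<notin> {v. \<forall>m\<ge>max N (N0 k). \<not> k \<le> fringe (grow v m)}" using nB that by auto
      then obtain m where "m \<ge> max N (N0 k)" "k \<le> fringe (grow v m)" by auto
      then show ?thesis by auto
    qed
    then have "limsup (\<lambda>n. ereal (real (fringe (bst v n)))) = \<infinity>" by (rule limsup_inf)
    then show False using v by simp
  qed
qed


end
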